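(* Let $R$ be a ring with unity and involution $*$, and let $a\in R$. The following statements are equivalent. (1) $a$ is Moore-Penrose invertible. (2) $a^*a$ is strongly left $(a^*,a)$-invertible. (3) $aa^*$ is strongly left $(a,a^* )$-invertible.
   Context: $a$ is Moore-Penrose invertible if there exists $x\in R$ with $axa=a$, $xax=x$, $(ax)^*=ax$, $(xa)^*=xa$. For $u,b,c\in R$, $u$ is strongly left $(b,c)$-invertible if $b\in Rcub$ and $cub$ is regular (there exists $z$ with $cub\,z\,cub=cub$). *)

theory Defs
  imports Main
begin

class ring_inv = ring_1 +
  fixes inv_star :: "'a \<Rightarrow> 'a"  ("_\<^sup>\<star>" [1000] 999)
  assumes star_add: "(x + y)\<^sup>\<star> = x\<^sup>\<star> + y\<^sup>\<star>"
    and star_mult: "(x * y)\<^sup>\<star> = y\<^sup>\<star> * x\<^sup>\<star>"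
    and star_star: "(x\<^sup>\<star>)\<^sup>\<star> = x"

definition MP_invertible :: "'a::ring_inv \<Rightarrow> bool" where
  "MP_invertible a \<longleftrightarrow> (\<exists>x. a * x * a = a \<and> x * a * x = x \<and>
      (a * x)\<^sup>\<star> = a * x \<and> (x * a)\<^sup>\<star> = x * a)"

definition regular :: "'a::ring_1 \<Rightarrow> bool" where
  "regular a \<longleftrightarrow> (\<exists>z. a * z * a = a)"

definition strongly_left_invertible :: "'a::ring_1 \<Rightarrow> 'a \<Rightarrow> 'a \<Rightarrow> bool" where
  "strongly_left_invertible u b c \<longleftrightarrow> (\<exists>r. b = r * (c * u * b)) \<and> regular (c * u * b)"

end

theory Submission
  imports Defs
begin

lemma MP_star:
  fixes a :: "'a::ring_inv"
  assumes "MP_invertible a" shows "MP_invertible (a\<^sup>\<star>)"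
proof -
  obtain x where h: "a * x * a = a" "x * a * x = x" "(a * x)\<^sup>\<star> = a * x" "(x * a)\<^sup>\<star> = x * a"
    using assms unfolding MP_invertible_def by blast
  have "a\<^sup>\<star> * x\<^sup>\<star> * a\<^sup>\<star> = (a * x * a)\<^sup>\<star>" by (simp add: star_mult mult.assoc)
  hence "a\<^sup>\<star> * x\<^sup>\<star> * a\<^sup>\<star> = a\<^sup>\<star>" using h(1) by simp
  moreover have "x\<^sup>\<star> * a\<^sup>\<star> * x\<^sup>\<star> = (x * a * x)\<^sup>\<star>" by (simp add: star_mult mult.assoc)
  hence "x\<^sup>\<star> * a\<^sup>\<star> * x\<^sup>\<star> = x\<^sup>\<star>" using h(2) by simp
  moreover have "(a\<^sup>\<star> * x\<^sup>\<star>)\<^sup>\<star> = a\<^sup>\<star> * x\<^sup>\<star>" using h(4) by (simp add: star_mult star_star)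
  moreover have "(x\<^sup>\<star> * a\<^sup>\<star>)\<^sup>\<star> = x\<^sup>\<star> * a\<^sup>\<star>" using h(3) by (simp add: star_mult star_star)
  ultimately show ?thesis unfolding MP_invertible_def by blast
qed

lemma part1:
  fixes a :: "'a::ring_inv"
  shows "MP_invertible a \<longleftrightarrow> strongly_left_invertible (a\<^sup>\<star> * a) (a\<^sup>\<star>) a"
proof
  assume "MP_invertible a"
  then obtain x where h: "a * x * a = a" "x * a * x = x" "(a * x)\<^sup>\<star> = a * x" "(x * a)\<^sup>\<star> = x * a"
    unfolding MP_invertible_def by blast
  have e1: "a\<^sup>\<star> * a * x = a\<^sup>\<star>"
  proof -
    have "a\<^sup>\<star> = (a * x * a)\<^sup>\<star>" using h(1) by simp
    also have "\<dots> = a\<^sup>\<star> * (a * x)\<^sup>\<star>" by (simp add: star_mult mult.assoc)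
    finally show ?thesis using h(3) by (simp add: mult.assoc)
  qed
  have e2: "x * a * a\<^sup>\<star> = a\<^sup>\<star>"
  proof -
    have "a\<^sup>\<star> = (a * (x * a))\<^sup>\<star>" using h(1) by (simp add: mult.assoc)
    also have "\<dots> = (x * a)\<^sup>\<star> * a\<^sup>\<star>" by (simp add: star_mult)
    finally show ?thesis using h(4) by simp
  qed
  have e3: "x\<^sup>\<star> * a\<^sup>\<star> * a = a"
  proof -
    have "x\<^sup>\<star> * a\<^sup>\<star> * a = (a\<^sup>\<star> * a * x)\<^sup>\<star>" by (simp add: star_mult star_star mult.assoc)
    then show ?thesis using e1 by (simp add: star_star)
  qed
  have e4: "a * a\<^sup>\<star> * x\<^sup>\<star> = a"
  proof -
    have "a * a\<^sup>\<star> * x\<^sup>\<star> = (x * a * a\<^sup>\<star>)\<^sup>\<star>" by (simp add: star_mult star_star mult.assoc)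
    then show ?thesis using e2 by (simp add: star_star)
  qed
  have B: "a\<^sup>\<star> = (x * x\<^sup>\<star> * x) * (a * (a\<^sup>\<star> * a) * a\<^sup>\<star>)"
  proof -
    have "a\<^sup>\<star> = x * a * a\<^sup>\<star>" using e2 by simp
    also have "\<dots> = x * (x\<^sup>\<star> * a\<^sup>\<star> * a) * a\<^sup>\<star>" using e3 by simp
    also have "\<dots> = x * x\<^sup>\<star> * (a\<^sup>\<star>) * a * a\<^sup>\<star>" by (simp add: mult.assoc)
    also have "\<dots> = x * x\<^sup>\<star> * (x * a * a\<^sup>\<star>) * a * a\<^sup>\<star>" using e2 by simp
    also have "\<dots> = (x * x\<^sup>\<star> * x) * (a * (a\<^sup>\<star> * a) * a\<^sup>\<star>)" by (simp add: mult.assoc)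
    finally show ?thesis .
  qed
  define b where "b = a * a\<^sup>\<star>"
  define g where "g = x\<^sup>\<star> * x"
  have bg: "b * g = a * x" unfolding b_def g_def using e4
    by (simp add: mult.assoc[symmetric])
  have bax: "b * (a * x) = b" unfolding b_def using e1
    by (simp add: mult.assoc)
  have axb: "(a * x) * b = b" unfolding b_def using h(1)
    by (simp add: mult.assoc[symmetric])
  have "(b * b) * (g * g) * (b * b) = b * b"
  proof -
    have "(b * b) * (g * g) * (b * b) = b * (b * g) * g * b * b" by (simp add: mult.assoc)
    also have "\<dots> = b * g * b * b" using bg bax by (simp add: mult.assoc)
    also have "\<dots> = b * b" using bg axb by (simp add: mult.assoc)
    finally show ?thesis .
  qed
  moreover have "b * b = a * (a\<^sup>\<star> * a) * a\<^sup>\<star>" unfolding b_def by (simp add: mult.assoc)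
  ultimately have "regular (a * (a\<^sup>\<star> * a) * a\<^sup>\<star>)" unfolding regular_def by metis
  with B show "strongly_left_invertible (a\<^sup>\<star> * a) (a\<^sup>\<star>) a"
    unfolding strongly_left_invertible_def by blast
next
  assume "strongly_left_invertible (a\<^sup>\<star> * a) (a\<^sup>\<star>) a"
  then obtain r where r: "a\<^sup>\<star> = r * (a * (a\<^sup>\<star> * a) * a\<^sup>\<star>)"
    unfolding strongly_left_invertible_def by blast
  define y where "y = a\<^sup>\<star> * r\<^sup>\<star>"
  have ay: "a = a * a\<^sup>\<star> * a * y"
  proof -
    have "a = (a\<^sup>\<star>)\<^sup>\<star>" by (simp add: star_star)
    also have "\<dots> = (r * (a * (a\<^sup>\<star> * a) * a\<^sup>\<star>))\<^sup>\<star>" using r by simp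
    also have "\<dots> = a * a\<^sup>\<star> * a * y" unfolding y_def by (simp add: star_mult star_star mult.assoc)
    finally show ?thesis .
  qed
  define w where "w = a * y"
  have aw: "a = a * a\<^sup>\<star> * w" using ay unfolding w_def by (simp add: mult.assoc)
  have aws: "a\<^sup>\<star> = w\<^sup>\<star> * a * a\<^sup>\<star>"
  proof -
    have "a\<^sup>\<star> = (a * a\<^sup>\<star> * w)\<^sup>\<star>" using aw by simp
    also have "\<dots> = w\<^sup>\<star> * a * a\<^sup>\<star>" by (simp add: star_mult star_star mult.assoc)
    finally show ?thesis .
  qed
  define q where "q = a\<^sup>\<star> * w"
  have q1: "q = w\<^sup>\<star> * a * a\<^sup>\<star> * w" unfolding q_def using aws by simp
  have qs: "q\<^sup>\<star> = q" unfolding q1 by (simp add: star_mult star_star mult.assoc)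
  have aq: "a * q = a" unfolding q_def using aw by (simp add: mult.assoc)
  have q2: "q = y\<^sup>\<star> * a\<^sup>\<star> * a"
  proof -
    have "q = q\<^sup>\<star>" using qs by simp
    also have "\<dots> = y\<^sup>\<star> * a\<^sup>\<star> * a" unfolding q_def w_def by (simp add: star_mult star_star mult.assoc)
    finally show ?thesis .
  qed
  define u where "u = a * y\<^sup>\<star>"
  have au: "a = u * a\<^sup>\<star> * a"
  proof -
    have "a = a * q" using aq by simp
    also have "\<dots> = u * a\<^sup>\<star> * a" unfolding q2 u_def by (simp add: mult.assoc)
    finally show ?thesis .
  qed
  have aus: "a\<^sup>\<star> = a\<^sup>\<star> * a * u\<^sup>\<star>"
  proof -
    have "a\<^sup>\<star> = (u * a\<^sup>\<star> * a)\<^sup>\<star>" using au by simp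
    also have "\<dots> = a\<^sup>\<star> * a * u\<^sup>\<star>" by (simp add: star_mult star_star mult.assoc)
    finally show ?thesis .
  qed
  define p where "p = u * a\<^sup>\<star>"
  have p1: "p = u * a\<^sup>\<star> * a * u\<^sup>\<star>"
  proof -
    have "p = u * (a\<^sup>\<star> * a * u\<^sup>\<star>)" unfolding p_def using aus by simp
    then show ?thesis by (simp add: mult.assoc)
  qed
  have ps: "p\<^sup>\<star> = p" unfolding p1 by (simp add: star_mult star_star mult.assoc)
  have pa: "p * a = a" unfolding p_def using au by simp
  define t where "t = y\<^sup>\<star> * a\<^sup>\<star>"
  have pt: "p = a * t" unfolding p_def u_def t_def by (simp add: mult.assoc)
  have qt: "q = t * a" unfolding q2 t_def by simp
  define x where "x = t * a * t"
  have ax: "a * x = p"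
  proof -
    have "a * x = (a * t) * a * t" unfolding x_def by (simp add: mult.assoc)
    also have "\<dots> = a * t" using pt pa by simp
    finally show ?thesis using pt by simp
  qed
  have xa: "x * a = q"
  proof -
    have "x * a = t * (a * t) * a" unfolding x_def by (simp add: mult.assoc)
    also have "\<dots> = t * a" using pt pa by (simp add: mult.assoc)
    finally show ?thesis using qt by simp
  qed
  have "a * x * a = a" using ax pa by simp
  moreover have "x * a * x = x"
  proof -
    have ata: "a * t * a = a" using pt pa by simp
    have "x * a * x = t * (a * t * a) * t * a * t" unfolding x_def by (simp add: mult.assoc)
    also have "\<dots> = t * (a * t * a) * t" using ata by (simp add: mult.assoc)
    also have "\<dots> = x" unfolding x_def using ata by simp
    finally show ?thesis .
  qed
  ultimately show "MP_invertible a" unfolding MP_invertible_def using ps qs ax xa by metis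
qed

theorem corollary3p14:
  fixes a :: "'a::ring_inv"
  shows "(MP_invertible a \<longleftrightarrow> strongly_left_invertible (a\<^sup>\<star> * a) (a\<^sup>\<star>) a)
       \<and> (MP_invertible a \<longleftrightarrow> strongly_left_invertible (a * a\<^sup>\<star>) a (a\<^sup>\<star>))"
proof
  show "MP_invertible a \<longleftrightarrow> strongly_left_invertible (a\<^sup>\<star> * a) (a\<^sup>\<star>) a" by (rule part1)
  have "MP_invertible a \<longleftrightarrow> MP_invertible (a\<^sup>\<star>)" using MP_star[of a] MP_star[of "a\<^sup>\<star>"] by (auto simp: star_star)
  also have "\<dots> \<longleftrightarrow> strongly_left_invertible (a * a\<^sup>\<star>) a (a\<^sup>\<star>)"
    using part1[of "a\<^sup>\<star>"] by (simp add: star_star)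
  finally show "MP_invertible a \<longleftrightarrow> strongly_left_invertible (a * a\<^sup>\<star>) a (a\<^sup>\<star>)" .
qed

end
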